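(* Let $M$ be a multigraph with $n$ vertices. Then $M$ is the double competition multigraph of an acyclic digraph if and only if there exist an ordering $(v_1,\ldots,v_n)$ of the vertices of $M$ and a double indexed edge clique partition $\{S_{ij}\mid i,j\in[n]\}$ of $M$ such that the following conditions hold: (I) for any $i,j\in[n]$, if $|A_i\cap B_j|\ge 2$, then $A_i\cap B_j=S_{ij}$; (IV) for any $i,j,k\in[n]$, $v_k\in S_{ij}$ implies $i<k<j$, where $A_i = S_{i*}\cup T^+_i$, $S_{i*} := \bigcup_{p\in[n]} S_{ip}$, $T^+_i := \{v_b \mid a,b\in[n],\ v_i\in S_{ab}\}$, and $B_j = S_{*j}\cup T^-_j$, $S_{*j} := \bigcup_{q\in[n]} S_{qj}$, $T^-_j := \{v_a \mid a,b\in[n],\ v_j\in S_{ab}\}$.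
   Context: A digraph $D$ is a pair $(V(D),A(D))$ with $A(D)$ a set of ordered pairs of vertices (arcs); $D$ is acyclic if it has no directed cycles (in particular no loops). $N^+_D(x)=\{v\mid (x,v)\in A(D)\}$ and $N^-_D(x)=\{v\mid (v,x)\in A(D)\}$. A multigraph $M$ (without loops) is a vertex set $V(M)$ together with a function $m_M$ assigning to each unordered pair $\{x,y\}$ of distinct vertices a nonnegative integer, the number of edges between $x$ and $y$. The double competition multigraph of a digraph $D$ is the multigraph $M$ with $V(M)=V(D)$ and $m_M(\{x,y\}) = |N^+_D(x)\cap N^+_D(y)|\cdot|N^-_D(x)\cap N^-_D(y)|$ for distinct $x,y$. A clique of $M$ is a set of vertices that are pairwise adjacent (i.e. $m_M\ge 1$ on every pair of distinct elements); the empty set and singletons count as cliques. An edge clique partition of $M$ is a family (multiset) $\mathcal{F}$ of cliques of $M$ such that any two distinct vertices $x,y$ are contained in exactly $m_M(\{x,y\})$ members of $\mathcal{F}$; a double indexed edge clique partition $\{S_{ij}\mid i,j\in[n]\}$ is such a family indexed by pairs $(i,j)\in[n]\times[n]$ (members may be empty). $[n]=\{1,\ldots,n\}$. *)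

theory Defs
  imports Main
begin

text \<open>A multigraph on vertex set V is given by a multiplicity function m on
unordered pairs, m {x,y} for distinct x, y in V. A digraph on V is an arc set
Arcs with Arcs a subset of V x V.\<close>

definition out_nbrs :: "('a \<times> 'a) set \<Rightarrow> 'a \<Rightarrow> 'a set" where
  "out_nbrs Arcs x = {v. (x, v) \<in> Arcs}"

definition in_nbrs :: "('a \<times> 'a) set \<Rightarrow> 'a \<Rightarrow> 'a set" where
  "in_nbrs Arcs x = {v. (v, x) \<in> Arcs}"

definition is_double_competition_multigraph ::
  "'a set \<Rightarrow> ('a set \<Rightarrow> nat) \<Rightarrow> ('a \<times> 'a) set \<Rightarrow> bool" where
  "is_double_competition_multigraph V m Arcs \<longleftrightarrow>
     (\<forall>x\<in>V. \<forall>y\<in>V. x \<noteq> y \<longrightarrow>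
        m {x, y} = card (out_nbrs Arcs x \<inter> out_nbrs Arcs y) *
                   card (in_nbrs Arcs x \<inter> in_nbrs Arcs y))"

definition is_clique :: "'a set \<Rightarrow> ('a set \<Rightarrow> nat) \<Rightarrow> 'a set \<Rightarrow> bool" where
  "is_clique V m K \<longleftrightarrow> K \<subseteq> V \<and> (\<forall>x\<in>K. \<forall>y\<in>K. x \<noteq> y \<longrightarrow> m {x, y} \<ge> 1)"

definition is_double_indexed_ecp ::
  "'a set \<Rightarrow> ('a set \<Rightarrow> nat) \<Rightarrow> nat \<Rightarrow> (nat \<Rightarrow> nat \<Rightarrow> 'a set) \<Rightarrow> bool" where
  "is_double_indexed_ecp V m n S \<longleftrightarrow>
     (\<forall>i\<in>{1..n}. \<forall>j\<in>{1..n}. is_clique V m (S i j)) \<and>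
     (\<forall>x\<in>V. \<forall>y\<in>V. x \<noteq> y \<longrightarrow>
        m {x, y} = card {(i, j). i \<in> {1..n} \<and> j \<in> {1..n} \<and> x \<in> S i j \<and> y \<in> S i j})"

definition S_row :: "nat \<Rightarrow> (nat \<Rightarrow> nat \<Rightarrow> 'a set) \<Rightarrow> nat \<Rightarrow> 'a set" where
  "S_row n S i = (\<Union>p\<in>{1..n}. S i p)"

definition S_col :: "nat \<Rightarrow> (nat \<Rightarrow> nat \<Rightarrow> 'a set) \<Rightarrow> nat \<Rightarrow> 'a set" where
  "S_col n S j = (\<Union>q\<in>{1..n}. S q j)"

definition T_plus :: "nat \<Rightarrow> (nat \<Rightarrow> 'a) \<Rightarrow> (nat \<Rightarrow> nat \<Rightarrow> 'a set) \<Rightarrow> nat \<Rightarrow> 'a set" where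
  "T_plus n v S i = {v b | a b. a \<in> {1..n} \<and> b \<in> {1..n} \<and> v i \<in> S a b}"

definition T_minus :: "nat \<Rightarrow> (nat \<Rightarrow> 'a) \<Rightarrow> (nat \<Rightarrow> nat \<Rightarrow> 'a set) \<Rightarrow> nat \<Rightarrow> 'a set" where
  "T_minus n v S j = {v a | a b. a \<in> {1..n} \<and> b \<in> {1..n} \<and> v j \<in> S a b}"

definition A_set :: "nat \<Rightarrow> (nat \<Rightarrow> 'a) \<Rightarrow> (nat \<Rightarrow> nat \<Rightarrow> 'a set) \<Rightarrow> nat \<Rightarrow> 'a set" where
  "A_set n v S i = S_row n S i \<union> T_plus n v S i"

definition B_set :: "nat \<Rightarrow> (nat \<Rightarrow> 'a) \<Rightarrow> (nat \<Rightarrow> nat \<Rightarrow> 'a set) \<Rightarrow> nat \<Rightarrow> 'a set" where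
  "B_set n v S j = S_col n S j \<union> T_minus n v S j"

end

theory Submission
  imports Defs
begin


lemma topo_sort:
  "finite V \<Longrightarrow> card V = n \<Longrightarrow> Arcs \<subseteq> V \<times> V \<Longrightarrow> acyclic Arcs \<Longrightarrow>
   \<exists>v. bij_betw v {1..n} V \<and> (\<forall>i\<in>{1..n}. \<forall>k\<in>{1..n}. (v i, v k) \<in> Arcs \<longrightarrow> i < k)"
proof (induction n arbitrary: V Arcs)
  case 0
  then show ?case by (auto simp: bij_betw_def)
next
  case (Suc n)
  then have "V \<noteq> {}" by auto
  then obtain x where "x \<in> V" by auto
  have "finite Arcs" using Suc.prems finite_subset by (metis finite_cartesian_product)
  then have wf: "wf (Arcs\<inverse>)" using Suc.prems finite_acyclic_wf_converse by blast
  obtain s where s: "s \<in> V" "\<And>y. (y, s) \<in> Arcs\<inverse> \<Longrightarrow> y \<notin> V"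
    using wfE_min[OF wf \<open>x \<in> V\<close>] by metis
  have sink: "(s, y) \<notin> Arcs" for y using s Suc.prems(3) by blast
  define V' where "V' = V - {s}"
  define A' where "A' = Arcs \<inter> V' \<times> V'"
  have "finite V'" "card V' = n" using Suc.prems s by (auto simp: V'_def)
  moreover have "A' \<subseteq> V' \<times> V'" by (auto simp: A'_def)
  moreover have "acyclic A'" using Suc.prems(4) by (rule acyclic_subset) (auto simp: A'_def)
  ultimately obtain v' where v': "bij_betw v' {1..n} V'"
     "\<forall>i\<in>{1..n}. \<forall>k\<in>{1..n}. (v' i, v' k) \<in> A' \<longrightarrow> i < k"
    using Suc.IH by blast
  define v where "v i = (if i = Suc n then s else v' i)" for i
  have "bij_betw v {1..n} V'"
    using v'(1) by (rule bij_betw_cong[THEN iffD1, rotated]) (auto simp: v_def)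
  then have "bij_betw v ({1..n} \<union> {Suc n}) (V' \<union> {s})"
    apply (rule bij_betw_combine[OF _ _])
    by (auto simp: v_def V'_def bij_betw_def)
  moreover have "{1..n} \<union> {Suc n} = {1..Suc n}" by auto
  moreover have "V' \<union> {s} = V" using s by (auto simp: V'_def)
  ultimately have bij: "bij_betw v {1..Suc n} V" by simp
  show ?case
  proof (intro exI conjI ballI impI, fact bij)
    fix i k assume ik: "i \<in> {1..Suc n}" "k \<in> {1..Suc n}" and a: "(v i, v k) \<in> Arcs"
    show "i < k"
    proof (cases "i = Suc n")
      case True then show ?thesis using a sink by (simp add: v_def)
    next
      case False
      show ?thesis
      proof (cases "k = Suc n")
        case True then show ?thesis using False ik by auto
      next
        case F2: False
        have "i \<in> {1..n}" "k \<in> {1..n}" using ik False F2 by auto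
        moreover have "v' i \<in> V'" "v' k \<in> V'" using v'(1) calculation by (auto simp: bij_betw_def)
        ultimately show ?thesis using v'(2) a False F2 by (auto simp: v_def A'_def)
      qed
    qed
  qed
qed


lemma count_lemma:
  assumes bij: "bij_betw v {1..n} V" and sub: "Arcs \<subseteq> V \<times> V"
  shows "card (out_nbrs Arcs x \<inter> out_nbrs Arcs y) * card (in_nbrs Arcs x \<inter> in_nbrs Arcs y) =
    card {(i, j). i \<in> {1..n} \<and> j \<in> {1..n} \<and> (v i, x) \<in> Arcs \<and> (v i, y) \<in> Arcs
                \<and> (x, v j) \<in> Arcs \<and> (y, v j) \<in> Arcs}"
proof -
  define I where "I = {i \<in> {1..n}. (v i, x) \<in> Arcs \<and> (v i, y) \<in> Arcs}"
  define J where "J = {j \<in> {1..n}. (x, v j) \<in> Arcs \<and> (y, v j) \<in> Arcs}"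
  have inj: "inj_on v {1..n}" and img: "v ` {1..n} = V" using bij by (auto simp: bij_betw_def)
  have e1: "{(i, j). i \<in> {1..n} \<and> j \<in> {1..n} \<and> (v i, x) \<in> Arcs \<and> (v i, y) \<in> Arcs
                \<and> (x, v j) \<in> Arcs \<and> (y, v j) \<in> Arcs} = I \<times> J"
    by (auto simp: I_def J_def)
  have "in_nbrs Arcs x \<inter> in_nbrs Arcs y = v ` I"
  proof
    show "in_nbrs Arcs x \<inter> in_nbrs Arcs y \<subseteq> v ` I"
    proof
      fix z assume z: "z \<in> in_nbrs Arcs x \<inter> in_nbrs Arcs y"
      then have "z \<in> V" using sub by (auto simp: in_nbrs_def)
      then obtain i where "i \<in> {1..n}" "z = v i" using img by auto
      then show "z \<in> v ` I" using z by (auto simp: I_def in_nbrs_def)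
    qed
  qed (auto simp: I_def in_nbrs_def)
  moreover have "inj_on v I" using inj by (rule inj_on_subset) (auto simp: I_def)
  ultimately have c1: "card (in_nbrs Arcs x \<inter> in_nbrs Arcs y) = card I" by (simp add: card_image)
  have "out_nbrs Arcs x \<inter> out_nbrs Arcs y = v ` J"
  proof
    show "out_nbrs Arcs x \<inter> out_nbrs Arcs y \<subseteq> v ` J"
    proof
      fix z assume z: "z \<in> out_nbrs Arcs x \<inter> out_nbrs Arcs y"
      then have "z \<in> V" using sub by (auto simp: out_nbrs_def)
      then obtain i where "i \<in> {1..n}" "z = v i" using img by auto
      then show "z \<in> v ` J" using z by (auto simp: J_def out_nbrs_def)
    qed
  qed (auto simp: J_def out_nbrs_def)
  moreover have "inj_on v J" using inj by (rule inj_on_subset) (auto simp: J_def)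
  ultimately have c2: "card (out_nbrs Arcs x \<inter> out_nbrs Arcs y) = card J" by (simp add: card_image)
  show ?thesis unfolding e1 card_cartesian_product c1 c2 by simp
qed



lemma forward:
  assumes fin: "finite V" and cV: "card V = n" and sub: "Arcs \<subseteq> V \<times> V" and ac: "acyclic Arcs"
    and dcm: "is_double_competition_multigraph V m Arcs"
  shows "\<exists>v S. bij_betw v {1..n} V \<and> is_double_indexed_ecp V m n S \<and>
       (\<forall>i\<in>{1..n}. \<forall>j\<in>{1..n}.
          card (A_set n v S i \<inter> B_set n v S j) \<ge> 2 \<longrightarrow> A_set n v S i \<inter> B_set n v S j = S i j) \<and>
       (\<forall>i\<in>{1..n}. \<forall>j\<in>{1..n}. \<forall>k\<in>{1..n}. v k \<in> S i j \<longrightarrow> i < k \<and> k < j)"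
proof -
  obtain v where bij: "bij_betw v {1..n} V"
    and ord: "\<forall>i\<in>{1..n}. \<forall>k\<in>{1..n}. (v i, v k) \<in> Arcs \<longrightarrow> i < k"
    using topo_sort[OF fin cV sub ac] by blast
  have vV: "v i \<in> V" if "i \<in> {1..n}" for i using bij that by (auto simp: bij_betw_def)
  define S where "S i j = out_nbrs Arcs (v i) \<inter> in_nbrs Arcs (v j)" for i j
  have ecp: "is_double_indexed_ecp V m n S"
    unfolding is_double_indexed_ecp_def
  proof (intro conjI ballI impI)
    fix i j assume ij: "i \<in> {1..n}" "j \<in> {1..n}"
    show "is_clique V m (S i j)" unfolding is_clique_def
    proof (intro conjI ballI impI)
      show "S i j \<subseteq> V" using sub by (auto simp: S_def out_nbrs_def)
      fix x y assume xy: "x \<in> S i j" "y \<in> S i j" "x \<noteq> y"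
      then have xyV: "x \<in> V" "y \<in> V" using sub by (auto simp: S_def out_nbrs_def)
      have f1: "finite (out_nbrs Arcs x \<inter> out_nbrs Arcs y)"
        by (rule finite_subset[OF _ fin]) (use sub in \<open>auto simp: out_nbrs_def\<close>)
      have f2: "finite (in_nbrs Arcs x \<inter> in_nbrs Arcs y)"
        by (rule finite_subset[OF _ fin]) (use sub in \<open>auto simp: in_nbrs_def\<close>)
      have "v j \<in> out_nbrs Arcs x \<inter> out_nbrs Arcs y" using xy by (auto simp: S_def in_nbrs_def out_nbrs_def)
      then have "card (out_nbrs Arcs x \<inter> out_nbrs Arcs y) \<ge> 1" using f1
        by (metis One_nat_def Suc_leI card_gt_0_iff empty_iff)
      moreover have "v i \<in> in_nbrs Arcs x \<inter> in_nbrs Arcs y" using xy by (auto simp: S_def in_nbrs_def out_nbrs_def)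
      then have "card (in_nbrs Arcs x \<inter> in_nbrs Arcs y) \<ge> 1" using f2
        by (metis One_nat_def Suc_leI card_gt_0_iff empty_iff)
      ultimately show "m {x, y} \<ge> 1" using dcm xyV xy(3)
        by (simp add: is_double_competition_multigraph_def)
    qed
  next
    fix x y assume xy: "x \<in> V" "y \<in> V" "x \<noteq> y"
    have "m {x, y} = card (out_nbrs Arcs x \<inter> out_nbrs Arcs y) * card (in_nbrs Arcs x \<inter> in_nbrs Arcs y)"
      using dcm xy by (simp add: is_double_competition_multigraph_def)
    also have "\<dots> = card {(i, j). i \<in> {1..n} \<and> j \<in> {1..n} \<and> (v i, x) \<in> Arcs \<and> (v i, y) \<in> Arcs
                \<and> (x, v j) \<in> Arcs \<and> (y, v j) \<in> Arcs}" by (rule count_lemma[OF bij sub])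
    also have "{(i, j). i \<in> {1..n} \<and> j \<in> {1..n} \<and> (v i, x) \<in> Arcs \<and> (v i, y) \<in> Arcs
                \<and> (x, v j) \<in> Arcs \<and> (y, v j) \<in> Arcs} =
       {(i, j). i \<in> {1..n} \<and> j \<in> {1..n} \<and> x \<in> S i j \<and> y \<in> S i j}"
      by (auto simp: S_def in_nbrs_def out_nbrs_def)
    finally show "m {x, y} = card {(i, j). i \<in> {1..n} \<and> j \<in> {1..n} \<and> x \<in> S i j \<and> y \<in> S i j}" .
  qed
  have AB: "A_set n v S i \<inter> B_set n v S j = S i j" if ij: "i \<in> {1..n}" "j \<in> {1..n}" for i j
  proof
    have "A_set n v S i \<subseteq> out_nbrs Arcs (v i)"
      by (auto simp: A_set_def S_row_def T_plus_def S_def in_nbrs_def out_nbrs_def)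
    moreover have "B_set n v S j \<subseteq> in_nbrs Arcs (v j)"
      by (auto simp: B_set_def S_col_def T_minus_def S_def in_nbrs_def out_nbrs_def)
    ultimately show "A_set n v S i \<inter> B_set n v S j \<subseteq> S i j" by (auto simp: S_def)
    show "S i j \<subseteq> A_set n v S i \<inter> B_set n v S j"
      using ij by (auto simp: A_set_def B_set_def S_row_def S_col_def)
  qed
  have IV: "\<forall>i\<in>{1..n}. \<forall>j\<in>{1..n}. \<forall>k\<in>{1..n}. v k \<in> S i j \<longrightarrow> i < k \<and> k < j"
    using ord by (auto simp: S_def in_nbrs_def out_nbrs_def)
  show ?thesis using bij ecp AB IV by blast
qed



lemma backward:
  assumes fin: "finite V" and bij: "bij_betw v {1..n} V" and ecp: "is_double_indexed_ecp V m n S"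
    and I: "\<forall>i\<in>{1..n}. \<forall>j\<in>{1..n}.
          card (A_set n v S i \<inter> B_set n v S j) \<ge> 2 \<longrightarrow> A_set n v S i \<inter> B_set n v S j = S i j"
    and IV: "\<forall>i\<in>{1..n}. \<forall>j\<in>{1..n}. \<forall>k\<in>{1..n}. v k \<in> S i j \<longrightarrow> i < k \<and> k < j"
  shows "\<exists>Arcs. Arcs \<subseteq> V \<times> V \<and> acyclic Arcs \<and> is_double_competition_multigraph V m Arcs"
proof -
  have inj: "inj_on v {1..n}" and img: "v ` {1..n} = V" using bij by (auto simp: bij_betw_def)
  have SV: "S i j \<subseteq> V" if "i \<in> {1..n}" "j \<in> {1..n}" for i j
    using ecp that by (auto simp: is_double_indexed_ecp_def is_clique_def)
  define Arcs where "Arcs = {(v i, x) | i j x. i \<in> {1..n} \<and> j \<in> {1..n} \<and> x \<in> S i j}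
     \<union> {(x, v j) | i j x. i \<in> {1..n} \<and> j \<in> {1..n} \<and> x \<in> S i j}"
  have sub: "Arcs \<subseteq> V \<times> V" using SV img by (auto simp: Arcs_def)
  define f where "f = inv_into {1..n} v"
  have fv: "f (v i) = i" if "i \<in> {1..n}" for i using inj that by (simp add: f_def)
  have ac: "acyclic Arcs"
  proof (rule acyclicI_order[where f = "\<lambda>x. n + 1 - f x"])
    fix a b assume ab: "(a, b) \<in> Arcs"
    show "n + 1 - f b < n + 1 - f a"
      using ab
    proof (unfold Arcs_def, elim UnE CollectE exE conjE)
      fix i j x assume e: "(a, b) = (v i, x)" "i \<in> {1..n}" "j \<in> {1..n}" "x \<in> S i j"
      then obtain k where k: "k \<in> {1..n}" "x = v k" using SV img by blast
      then have "i < k" using IV e by blast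
      then show ?thesis using e k fv by auto
    next
      fix i j x assume e: "(a, b) = (x, v j)" "i \<in> {1..n}" "j \<in> {1..n}" "x \<in> S i j"
      then obtain k where k: "k \<in> {1..n}" "x = v k" using SV img by blast
      then have "k < j" using IV e by blast
      then show ?thesis using e k fv by auto
    qed
  qed
  have Ach: "x \<in> A_set n v S i \<longleftrightarrow> (v i, x) \<in> Arcs" if i: "i \<in> {1..n}" for i x
  proof
    assume "x \<in> A_set n v S i"
    then show "(v i, x) \<in> Arcs" using i by (auto simp: A_set_def S_row_def T_plus_def Arcs_def)
  next
    assume "(v i, x) \<in> Arcs"
    then show "x \<in> A_set n v S i"
      unfolding Arcs_def
    proof (elim UnE CollectE exE conjE)
      fix i' j y assume e: "(v i, x) = (v i', y)" "i' \<in> {1..n}" "j \<in> {1..n}" "y \<in> S i' j"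
      then have "i' = i" using inj i by (auto dest: inj_onD)
      then show ?thesis using e by (auto simp: A_set_def S_row_def)
    next
      fix i' j y assume e: "(v i, x) = (y, v j)" "i' \<in> {1..n}" "j \<in> {1..n}" "y \<in> S i' j"
      then show ?thesis by (auto simp: A_set_def T_plus_def)
    qed
  qed
  have Bch: "x \<in> B_set n v S j \<longleftrightarrow> (x, v j) \<in> Arcs" if j: "j \<in> {1..n}" for j x
  proof
    assume "x \<in> B_set n v S j"
    then show "(x, v j) \<in> Arcs" using j by (auto simp: B_set_def S_col_def T_minus_def Arcs_def)
  next
    assume "(x, v j) \<in> Arcs"
    then show "x \<in> B_set n v S j"
      unfolding Arcs_def
    proof (elim UnE CollectE exE conjE)
      fix i j' y assume e: "(x, v j) = (v i, y)" "i \<in> {1..n}" "j' \<in> {1..n}" "y \<in> S i j'"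
      then show ?thesis by (auto simp: B_set_def T_minus_def)
    next
      fix i j' y assume e: "(x, v j) = (y, v j')" "i \<in> {1..n}" "j' \<in> {1..n}" "y \<in> S i j'"
      then have "j' = j" using inj j by (auto dest: inj_onD)
      then show ?thesis using e by (auto simp: B_set_def S_col_def)
    qed
  qed
  have dcm: "is_double_competition_multigraph V m Arcs"
    unfolding is_double_competition_multigraph_def
  proof (intro ballI impI)
    fix x y assume xy: "x \<in> V" "y \<in> V" "x \<noteq> y"
    have "card (out_nbrs Arcs x \<inter> out_nbrs Arcs y) * card (in_nbrs Arcs x \<inter> in_nbrs Arcs y) =
      card {(i, j). i \<in> {1..n} \<and> j \<in> {1..n} \<and> (v i, x) \<in> Arcs \<and> (v i, y) \<in> Arcs
                \<and> (x, v j) \<in> Arcs \<and> (y, v j) \<in> Arcs}" by (rule count_lemma[OF bij sub])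
    also have "{(i, j). i \<in> {1..n} \<and> j \<in> {1..n} \<and> (v i, x) \<in> Arcs \<and> (v i, y) \<in> Arcs
                \<and> (x, v j) \<in> Arcs \<and> (y, v j) \<in> Arcs} =
       {(i, j). i \<in> {1..n} \<and> j \<in> {1..n} \<and> x \<in> S i j \<and> y \<in> S i j}"
    proof (intro Collect_cong, clarify)
      fix i j
      show "(i \<in> {1..n} \<and> j \<in> {1..n} \<and> (v i, x) \<in> Arcs \<and> (v i, y) \<in> Arcs
                \<and> (x, v j) \<in> Arcs \<and> (y, v j) \<in> Arcs) =
            (i \<in> {1..n} \<and> j \<in> {1..n} \<and> x \<in> S i j \<and> y \<in> S i j)"
      proof (cases "i \<in> {1..n} \<and> j \<in> {1..n}")
        case True
        then have ij: "i \<in> {1..n}" "j \<in> {1..n}" by auto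
        have sAB: "S i j \<subseteq> A_set n v S i \<inter> B_set n v S j"
          using ij by (auto simp: A_set_def B_set_def S_row_def S_col_def)
        have "((v i, x) \<in> Arcs \<and> (v i, y) \<in> Arcs \<and> (x, v j) \<in> Arcs \<and> (y, v j) \<in> Arcs)
          = (x \<in> A_set n v S i \<inter> B_set n v S j \<and> y \<in> A_set n v S i \<inter> B_set n v S j)"
          using Ach[OF ij(1)] Bch[OF ij(2)] by blast
        also have "\<dots> = (x \<in> S i j \<and> y \<in> S i j)"
        proof
          assume a: "x \<in> A_set n v S i \<inter> B_set n v S j \<and> y \<in> A_set n v S i \<inter> B_set n v S j"
          have "A_set n v S i \<inter> B_set n v S j \<subseteq> V"
            using sub by (auto simp: Ach[OF ij(1)] Bch[OF ij(2)])
          then have "finite (A_set n v S i \<inter> B_set n v S j)" using fin finite_subset by blast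
          moreover have "{x, y} \<subseteq> A_set n v S i \<inter> B_set n v S j" using a by auto
          ultimately have "card {x, y} \<le> card (A_set n v S i \<inter> B_set n v S j)" by (rule card_mono)
          then have "card (A_set n v S i \<inter> B_set n v S j) \<ge> 2" using xy(3) by simp
          then have "A_set n v S i \<inter> B_set n v S j = S i j" using I ij by blast
          then show "x \<in> S i j \<and> y \<in> S i j" using a by auto
        qed (use sAB in auto)
        finally show ?thesis using ij by simp
      qed auto
    qed
    finally show "m {x, y} = card (out_nbrs Arcs x \<inter> out_nbrs Arcs y) * card (in_nbrs Arcs x \<inter> in_nbrs Arcs y)"
      using ecp xy by (simp add: is_double_indexed_ecp_def)
  qed
  show ?thesis using sub ac dcm by blast
qed



theorem theorem4:
  fixes V :: "'a set" and m :: "'a set \<Rightarrow> nat" and n :: nat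
  assumes "finite V" and "card V = n"
  shows "(\<exists>Arcs. Arcs \<subseteq> V \<times> V \<and> acyclic Arcs \<and> is_double_competition_multigraph V m Arcs)
    \<longleftrightarrow>
    (\<exists>v S. bij_betw v {1..n} V \<and> is_double_indexed_ecp V m n S \<and>
       (\<forall>i\<in>{1..n}. \<forall>j\<in>{1..n}.
          card (A_set n v S i \<inter> B_set n v S j) \<ge> 2 \<longrightarrow> A_set n v S i \<inter> B_set n v S j = S i j) \<and>
       (\<forall>i\<in>{1..n}. \<forall>j\<in>{1..n}. \<forall>k\<in>{1..n}. v k \<in> S i j \<longrightarrow> i < k \<and> k < j))"
proof
  assume "\<exists>Arcs. Arcs \<subseteq> V \<times> V \<and> acyclic Arcs \<and> is_double_competition_multigraph V m Arcs"
  then show "\<exists>v S. bij_betw v {1..n} V \<and> is_double_indexed_ecp V m n S \<and>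
       (\<forall>i\<in>{1..n}. \<forall>j\<in>{1..n}.
          card (A_set n v S i \<inter> B_set n v S j) \<ge> 2 \<longrightarrow> A_set n v S i \<inter> B_set n v S j = S i j) \<and>
       (\<forall>i\<in>{1..n}. \<forall>j\<in>{1..n}. \<forall>k\<in>{1..n}. v k \<in> S i j \<longrightarrow> i < k \<and> k < j)"
    using forward[OF assms] by blast
next
  assume "\<exists>v S. bij_betw v {1..n} V \<and> is_double_indexed_ecp V m n S \<and>
       (\<forall>i\<in>{1..n}. \<forall>j\<in>{1..n}.
          card (A_set n v S i \<inter> B_set n v S j) \<ge> 2 \<longrightarrow> A_set n v S i \<inter> B_set n v S j = S i j) \<and>
       (\<forall>i\<in>{1..n}. \<forall>j\<in>{1..n}. \<forall>k\<in>{1..n}. v k \<in> S i j \<longrightarrow> i < k \<and> k < j)"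
  then show "\<exists>Arcs. Arcs \<subseteq> V \<times> V \<and> acyclic Arcs \<and> is_double_competition_multigraph V m Arcs"
    using backward[OF assms(1)] by blast
qed

end
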